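(* Let $V$ be a commutative unital quantale whose underlying lattice is a frame and in which $k=\top$. If $(Y,b,+)$ is a strongly unital object in $\mathsf{VGrp}$, then for every $y\in Y$, \[b(0,y)=b(y,0)\otimes b(0,y).\]
   Context: A commutative unital quantale $V$ is a complete lattice (top $\top$, bottom $\bot$) with a commutative associative operation $\otimes$ with unit $k$ preserving arbitrary joins in each variable. A $V$-category $(X,a)$: $a\colon X\times X\to V$ with $k\le a(x,x)$ and $a(x,x')\otimes a(x',x'')\le a(x,x'')$. A $V$-group $(X,a,+)$ is a $V$-category with a group structure (additive, not necessarily abelian) such that $a(x_1,x_2)\otimes a(x_1',x_2')\le a(x_1+x_1',x_2+x_2')$; $V$-homomorphisms are group homomorphisms $f$ with $a(x,x')\le b(f(x),f(x'))$; this is the category $\mathsf{VGrp}$, pointed when $k=\top$. Limits are computed as in groups with the initial structure; the product of $(X,a),(Y,b)$ carries $(a\wedge b)((x,y),(x',y'))=a(x,x')\wedge b(y,y')$; kernels and pullbacks carry the restricted structure. Two morphisms with common codomain are jointly strongly epimorphic if whenever both factor through a monomorphism $m$, $m$ is an isomorphism. A point (split epimorphism $f\colon A\to Y$ with chosen section $s$) is strong if the kernel of $f$ and $s$ are jointly strongly epimorphic, and stably strong if every pullback of it along any morphism $g\colon Z\to Y$ (with induced section) is strong. An object $Y$ is strongly unital if the point $(\pi_2\colon Y\times Y\to Y,\ \langle 1,1\rangle)$ is stably strong. *)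

theory Defs
  imports "HOL-Algebra.Coset"
begin

definition comm_unital_quantale :: "('v::complete_lattice \<Rightarrow> 'v \<Rightarrow> 'v) \<Rightarrow> 'v \<Rightarrow> bool" where
  "comm_unital_quantale T k \<longleftrightarrow>
     (\<forall>x y. T x y = T y x) \<and>
     (\<forall>x y z. T (T x y) z = T x (T y z)) \<and>
     (\<forall>x. T k x = x \<and> T x k = x) \<and>
     (\<forall>x S. T x (Sup S) = Sup (T x ` S)) \<and>
     (\<forall>x S. T (Sup S) x = Sup ((\<lambda>s. T s x) ` S))"

definition is_frame :: "'v::complete_lattice itself \<Rightarrow> bool" where
  "is_frame _ \<longleftrightarrow> (\<forall>(x::'v) S. inf x (Sup S) = Sup (inf x ` S))"

definition vcat :: "('v::complete_lattice \<Rightarrow> 'v \<Rightarrow> 'v) \<Rightarrow> 'v \<Rightarrow> 'a set \<Rightarrow> ('a \<Rightarrow> 'a \<Rightarrow> 'v) \<Rightarrow> bool" where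
  "vcat T k X a \<longleftrightarrow>
     (\<forall>x\<in>X. k \<le> a x x) \<and>
     (\<forall>x\<in>X. \<forall>x'\<in>X. \<forall>x''\<in>X. T (a x x') (a x' x'') \<le> a x x'')"

text \<open>A V-group: a group (written multiplicatively in HOL-Algebra; the paper writes it
  additively, with neutral element 0 = one G) with a V-category structure on its carrier
  such that the group operation is a V-functor.\<close>
definition vgrp :: "('v::complete_lattice \<Rightarrow> 'v \<Rightarrow> 'v) \<Rightarrow> 'v \<Rightarrow> 'a monoid \<Rightarrow> ('a \<Rightarrow> 'a \<Rightarrow> 'v) \<Rightarrow> bool" where
  "vgrp T k G a \<longleftrightarrow> group G \<and> vcat T k (carrier G) a \<and>
     (\<forall>x1\<in>carrier G. \<forall>x2\<in>carrier G. \<forall>x1'\<in>carrier G. \<forall>x2'\<in>carrier G.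
        T (a x1 x2) (a x1' x2') \<le> a (x1 \<otimes>\<^bsub>G\<^esub> x1') (x2 \<otimes>\<^bsub>G\<^esub> x2'))"

definition vhom :: "'a monoid \<Rightarrow> ('a \<Rightarrow> 'a \<Rightarrow> 'v::complete_lattice) \<Rightarrow> 'b monoid \<Rightarrow> ('b \<Rightarrow> 'b \<Rightarrow> 'v) \<Rightarrow> ('a \<Rightarrow> 'b) \<Rightarrow> bool" where
  "vhom G a H b f \<longleftrightarrow> f \<in> hom G H \<and> (\<forall>x\<in>carrier G. \<forall>x'\<in>carrier G. a x x' \<le> b (f x) (f x'))"

text \<open>Monomorphism (left cancellable), with test objects whose carrier lives in the same
  type as the domain (this suffices, e.g. the kernel of m is such a test object).\<close>
definition vmono :: "('v::complete_lattice \<Rightarrow> 'v \<Rightarrow> 'v) \<Rightarrow> 'v \<Rightarrow> 'a monoid \<Rightarrow> ('a \<Rightarrow> 'a \<Rightarrow> 'v) \<Rightarrow> 'b monoid \<Rightarrow> ('b \<Rightarrow> 'b \<Rightarrow> 'v) \<Rightarrow> ('a \<Rightarrow> 'b) \<Rightarrow> bool" where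
  "vmono T k M c A a m \<longleftrightarrow> vhom M c A a m \<and>
     (\<forall>(W::'a monoid) w u v. vgrp T k W w \<and> vhom W w M c u \<and> vhom W w M c v \<and>
        (\<forall>x\<in>carrier W. m (u x) = m (v x)) \<longrightarrow> (\<forall>x\<in>carrier W. u x = v x))"

definition viso :: "'a monoid \<Rightarrow> ('a \<Rightarrow> 'a \<Rightarrow> 'v::complete_lattice) \<Rightarrow> 'b monoid \<Rightarrow> ('b \<Rightarrow> 'b \<Rightarrow> 'v) \<Rightarrow> ('a \<Rightarrow> 'b) \<Rightarrow> bool" where
  "viso M c A a m \<longleftrightarrow> vhom M c A a m \<and>
     (\<exists>n. vhom A a M c n \<and> (\<forall>x\<in>carrier M. n (m x) = x) \<and> (\<forall>x\<in>carrier A. m (n x) = x))"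

text \<open>Two morphisms p : K \<rightarrow> A and q : Y \<rightarrow> A are jointly strongly epimorphic if whenever
  both factor through a monomorphism m : M \<rightarrow> A, m is an isomorphism.  (Up to isomorphism
  every monomorphism into A has domain in the carrier type of A.)\<close>
definition jointly_strong_epi ::
  "('v::complete_lattice \<Rightarrow> 'v \<Rightarrow> 'v) \<Rightarrow> 'v \<Rightarrow> 'k monoid \<Rightarrow> ('k \<Rightarrow> 'k \<Rightarrow> 'v) \<Rightarrow> ('k \<Rightarrow> 'p)
    \<Rightarrow> 'y monoid \<Rightarrow> ('y \<Rightarrow> 'y \<Rightarrow> 'v) \<Rightarrow> ('y \<Rightarrow> 'p) \<Rightarrow> 'p monoid \<Rightarrow> ('p \<Rightarrow> 'p \<Rightarrow> 'v) \<Rightarrow> bool" where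
  "jointly_strong_epi T k K ka p Y b q A a \<longleftrightarrow>
     (\<forall>(M::'p monoid) c m u v.
        vgrp T k M c \<and> vmono T k M c A a m \<and> vhom K ka M c u \<and> vhom Y b M c v \<and>
        (\<forall>x\<in>carrier K. m (u x) = p x) \<and> (\<forall>y\<in>carrier Y. m (v y) = q y)
        \<longrightarrow> viso M c A a m)"

definition vkernel :: "'p monoid \<Rightarrow> 'y monoid \<Rightarrow> ('p \<Rightarrow> 'y) \<Rightarrow> 'p monoid" where
  "vkernel A Y f = A\<lparr>carrier := kernel A Y f\<rparr>"

definition strong_point ::
  "('v::complete_lattice \<Rightarrow> 'v \<Rightarrow> 'v) \<Rightarrow> 'v \<Rightarrow> 'p monoid \<Rightarrow> ('p \<Rightarrow> 'p \<Rightarrow> 'v)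
    \<Rightarrow> 'y monoid \<Rightarrow> ('y \<Rightarrow> 'y \<Rightarrow> 'v) \<Rightarrow> ('p \<Rightarrow> 'y) \<Rightarrow> ('y \<Rightarrow> 'p) \<Rightarrow> bool" where
  "strong_point T k A a Y b f s \<longleftrightarrow>
     jointly_strong_epi T k (vkernel A Y f) a (\<lambda>x. x) Y b s A a"

definition pb_grp :: "'z monoid \<Rightarrow> ('z \<Rightarrow> 'y) \<Rightarrow> 'p monoid \<Rightarrow> ('p \<Rightarrow> 'y) \<Rightarrow> ('z \<times> 'p) monoid" where
  "pb_grp Z g A f = (Z \<times>\<times> A)\<lparr>carrier := {(z, x). z \<in> carrier Z \<and> x \<in> carrier A \<and> g z = f x}\<rparr>"

definition prod_str :: "('z \<Rightarrow> 'z \<Rightarrow> 'v::complete_lattice) \<Rightarrow> ('p \<Rightarrow> 'p \<Rightarrow> 'v) \<Rightarrow> ('z \<times> 'p \<Rightarrow> 'z \<times> 'p \<Rightarrow> 'v)" where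
  "prod_str c a = (\<lambda>(z, x) (z', x'). inf (c z z') (a x x'))"

text \<open>The point Y \<times> Y \<rightarrow> Y (second projection, diagonal section) is stably strong:
  every pullback of it along any V-homomorphism g : Z \<rightarrow> Y (with the induced section
  z \<mapsto> (z, (g z, g z))) is strong.  Test objects Z range over V-groups whose carrier lives
  in the carrier type of Y.\<close>
definition strongly_unital :: "('v::complete_lattice \<Rightarrow> 'v \<Rightarrow> 'v) \<Rightarrow> 'v \<Rightarrow> 'a monoid \<Rightarrow> ('a \<Rightarrow> 'a \<Rightarrow> 'v) \<Rightarrow> bool" where
  "strongly_unital T k Y b \<longleftrightarrow>
     (\<forall>(Z::'a monoid) c g. vgrp T k Z c \<and> vhom Z c Y b g \<longrightarrow>
        strong_point T k (pb_grp Z g (Y \<times>\<times> Y) snd) (prod_str c (prod_str b b)) Z c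
          fst (\<lambda>z. (z, (g z, g z))))"

end

theory Submission
  imports Defs
begin

primrec tpow :: "('v \<Rightarrow> 'v \<Rightarrow> 'v) \<Rightarrow> 'v::complete_lattice \<Rightarrow> nat \<Rightarrow> 'v" where
  "tpow T c 0 = Orderings.top"
| "tpow T c (Suc n) = T c (tpow T c n)"

primrec conjs :: "'a monoid \<Rightarrow> 'a \<Rightarrow> nat \<Rightarrow> 'a set" where
  "conjs G y 0 = {\<one>\<^bsub>G\<^esub>}"
| "conjs G y (Suc n) = {u \<otimes>\<^bsub>G\<^esub> y \<otimes>\<^bsub>G\<^esub> inv\<^bsub>G\<^esub> u \<otimes>\<^bsub>G\<^esub> W | u W. u \<in> carrier G \<and> W \<in> conjs G y n}"

locale vq =
  fixes T :: "'v::complete_lattice \<Rightarrow> 'v \<Rightarrow> 'v"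
  assumes Q: "comm_unital_quantale T Orderings.top"
begin

lemma comm: "T x y = T y x" using Q unfolding comm_unital_quantale_def by blast
lemma assoc: "T (T x y) z = T x (T y z)" using Q unfolding comm_unital_quantale_def by blast
lemma top_l [simp]: "T Orderings.top x = x" using Q unfolding comm_unital_quantale_def by blast
lemma top_r [simp]: "T x Orderings.top = x" using Q unfolding comm_unital_quantale_def by blast
lemma Sup_r: "T x (Sup S) = Sup (T x ` S)" using Q unfolding comm_unital_quantale_def by blast
lemma Sup_l: "T (Sup S) x = Sup ((\<lambda>s. T s x) ` S)" using Q unfolding comm_unital_quantale_def by blast

sublocale abel_semigroup T
  by unfold_locales (auto simp: assoc intro: comm)

lemma mono_r: "a \<le> a' \<Longrightarrow> T c a \<le> T c a'"
proof -
  assume "a \<le> a'"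
  hence "Sup {a, a'} = a'" by (simp add: sup.absorb2)
  hence "T c a' = Sup (T c ` {a,a'})" using Sup_r[of c "{a,a'}"] by simp
  thus ?thesis by (metis Sup_upper imageI insertI1)
qed

lemma mono: "a \<le> a' \<Longrightarrow> c \<le> c' \<Longrightarrow> T a c \<le> T a' c'"
  by (metis comm mono_r order_trans)

lemma le_r: "T x y \<le> y" using mono[of x Orderings.top y y] by simp
lemma le_l: "T x y \<le> x" using mono[of x x y Orderings.top] by simp

lemma Sup_le2: "(\<And>a c. a \<in> A \<Longrightarrow> c \<in> C \<Longrightarrow> T a c \<le> X) \<Longrightarrow> T (Sup A) (Sup C) \<le> X"
  by (simp add: Sup_l Sup_r SUP_le_iff)

lemma tpow_add: "tpow T c (n + m) = T (tpow T c n) (tpow T c m)"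
  by (induct n) (auto simp: assoc)

end


locale vqg = vq T for T :: "'v::complete_lattice \<Rightarrow> 'v \<Rightarrow> 'v" +
  fixes Y :: "'a monoid" and b :: "'a \<Rightarrow> 'a \<Rightarrow> 'v"
  assumes VG: "vgrp T Orderings.top Y b"

sublocale vqg \<subseteq> Y: group Y using VG unfolding vgrp_def by blast

context vqg begin

lemma Y_cancel1 [simp]: "x \<in> carrier Y \<Longrightarrow> z \<in> carrier Y \<Longrightarrow> x \<otimes>\<^bsub>Y\<^esub> (inv\<^bsub>Y\<^esub> x \<otimes>\<^bsub>Y\<^esub> z) = z"
  by (simp add: Y.m_assoc[symmetric])

lemma Y_cancel2 [simp]: "x \<in> carrier Y \<Longrightarrow> z \<in> carrier Y \<Longrightarrow> inv\<^bsub>Y\<^esub> x \<otimes>\<^bsub>Y\<^esub> (x \<otimes>\<^bsub>Y\<^esub> z) = z"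
  by (simp add: Y.m_assoc[symmetric])

lemma b_refl [simp]: "x \<in> carrier Y \<Longrightarrow> b x x = Orderings.top"
  using VG unfolding vgrp_def vcat_def by (simp add: top_le)

lemma b_trans: "x \<in> carrier Y \<Longrightarrow> y \<in> carrier Y \<Longrightarrow> z \<in> carrier Y \<Longrightarrow> T (b x y) (b y z) \<le> b x z"
  using VG unfolding vgrp_def vcat_def by blast

lemma b_comp: "x1 \<in> carrier Y \<Longrightarrow> x2 \<in> carrier Y \<Longrightarrow> x1' \<in> carrier Y \<Longrightarrow> x2' \<in> carrier Y \<Longrightarrow>
   T (b x1 x2) (b x1' x2') \<le> b (x1 \<otimes>\<^bsub>Y\<^esub> x1') (x2 \<otimes>\<^bsub>Y\<^esub> x2')"
  using VG unfolding vgrp_def by blast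

lemma b_lt_le: "t \<in> carrier Y \<Longrightarrow> x \<in> carrier Y \<Longrightarrow> y \<in> carrier Y \<Longrightarrow> b x y \<le> b (t \<otimes>\<^bsub>Y\<^esub> x) (t \<otimes>\<^bsub>Y\<^esub> y)"
  using b_comp[of t t x y] by simp

lemma b_rt_le: "t \<in> carrier Y \<Longrightarrow> x \<in> carrier Y \<Longrightarrow> y \<in> carrier Y \<Longrightarrow> b x y \<le> b (x \<otimes>\<^bsub>Y\<^esub> t) (y \<otimes>\<^bsub>Y\<^esub> t)"
  using b_comp[of x y t t] by simp

lemma b_lt: "t \<in> carrier Y \<Longrightarrow> x \<in> carrier Y \<Longrightarrow> y \<in> carrier Y \<Longrightarrow> b (t \<otimes>\<^bsub>Y\<^esub> x) (t \<otimes>\<^bsub>Y\<^esub> y) = b x y"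
  using b_lt_le[of t x y] b_lt_le[of "inv\<^bsub>Y\<^esub> t" "t \<otimes>\<^bsub>Y\<^esub> x" "t \<otimes>\<^bsub>Y\<^esub> y"]
  by (simp add: Y.m_assoc[symmetric] antisym)

lemma b_rt: "t \<in> carrier Y \<Longrightarrow> x \<in> carrier Y \<Longrightarrow> y \<in> carrier Y \<Longrightarrow> b (x \<otimes>\<^bsub>Y\<^esub> t) (y \<otimes>\<^bsub>Y\<^esub> t) = b x y"
  using b_rt_le[of t x y] b_rt_le[of "inv\<^bsub>Y\<^esub> t" "x \<otimes>\<^bsub>Y\<^esub> t" "y \<otimes>\<^bsub>Y\<^esub> t"]
  by (simp add: Y.m_assoc antisym)

lemma b_conj: "t \<in> carrier Y \<Longrightarrow> x \<in> carrier Y \<Longrightarrow> y \<in> carrier Y \<Longrightarrow>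
   b (t \<otimes>\<^bsub>Y\<^esub> x \<otimes>\<^bsub>Y\<^esub> inv\<^bsub>Y\<^esub> t) (t \<otimes>\<^bsub>Y\<^esub> y \<otimes>\<^bsub>Y\<^esub> inv\<^bsub>Y\<^esub> t) = b x y"
  by (simp add: b_rt b_lt)

lemma b_N: "x \<in> carrier Y \<Longrightarrow> y \<in> carrier Y \<Longrightarrow> b x y = b \<one>\<^bsub>Y\<^esub> (inv\<^bsub>Y\<^esub> x \<otimes>\<^bsub>Y\<^esub> y)"
  using b_lt[of "inv\<^bsub>Y\<^esub> x" x y] by simp

lemma b_inv_swap: "y \<in> carrier Y \<Longrightarrow> b \<one>\<^bsub>Y\<^esub> (inv\<^bsub>Y\<^esub> y) = b y \<one>\<^bsub>Y\<^esub>"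
  using b_N[of y "\<one>\<^bsub>Y\<^esub>"] by simp

lemma b_N_mult: "x \<in> carrier Y \<Longrightarrow> y \<in> carrier Y \<Longrightarrow>
   T (b \<one>\<^bsub>Y\<^esub> x) (b \<one>\<^bsub>Y\<^esub> y) \<le> b \<one>\<^bsub>Y\<^esub> (x \<otimes>\<^bsub>Y\<^esub> y)"
  using b_comp[of "\<one>\<^bsub>Y\<^esub>" x "\<one>\<^bsub>Y\<^esub>" y] by simp

lemma b_N_conj: "t \<in> carrier Y \<Longrightarrow> x \<in> carrier Y \<Longrightarrow>
   b \<one>\<^bsub>Y\<^esub> (t \<otimes>\<^bsub>Y\<^esub> x \<otimes>\<^bsub>Y\<^esub> inv\<^bsub>Y\<^esub> t) = b \<one>\<^bsub>Y\<^esub> x"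
  using b_conj[of t "\<one>\<^bsub>Y\<^esub>" x] by simp

lemma conjs_carrier: "y \<in> carrier Y \<Longrightarrow> W \<in> conjs Y y n \<Longrightarrow> W \<in> carrier Y"
  by (induct n arbitrary: W) auto

lemma conjs_conj: "y \<in> carrier Y \<Longrightarrow> t \<in> carrier Y \<Longrightarrow> W \<in> conjs Y y n \<Longrightarrow>
   t \<otimes>\<^bsub>Y\<^esub> W \<otimes>\<^bsub>Y\<^esub> inv\<^bsub>Y\<^esub> t \<in> conjs Y y n"
proof (induct n arbitrary: W)
  case 0 thus ?case by simp
next
  case (Suc n)
  then obtain u V where uV: "u \<in> carrier Y" "V \<in> conjs Y y n"
    "W = u \<otimes>\<^bsub>Y\<^esub> y \<otimes>\<^bsub>Y\<^esub> inv\<^bsub>Y\<^esub> u \<otimes>\<^bsub>Y\<^esub> V" by auto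
  have V: "V \<in> carrier Y" using conjs_carrier Suc uV by blast
  have IH: "t \<otimes>\<^bsub>Y\<^esub> V \<otimes>\<^bsub>Y\<^esub> inv\<^bsub>Y\<^esub> t \<in> conjs Y y n" using Suc uV by blast
  have "t \<otimes>\<^bsub>Y\<^esub> W \<otimes>\<^bsub>Y\<^esub> inv\<^bsub>Y\<^esub> t =
     (t \<otimes>\<^bsub>Y\<^esub> u) \<otimes>\<^bsub>Y\<^esub> y \<otimes>\<^bsub>Y\<^esub> inv\<^bsub>Y\<^esub> (t \<otimes>\<^bsub>Y\<^esub> u) \<otimes>\<^bsub>Y\<^esub> (t \<otimes>\<^bsub>Y\<^esub> V \<otimes>\<^bsub>Y\<^esub> inv\<^bsub>Y\<^esub> t)"
    using uV V Suc by (simp add: Y.m_assoc Y.inv_mult_group)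
  thus ?case using IH uV Suc by auto
qed

lemma conjs_mult: "y \<in> carrier Y \<Longrightarrow> W \<in> conjs Y y n \<Longrightarrow> W' \<in> conjs Y y m \<Longrightarrow>
   W \<otimes>\<^bsub>Y\<^esub> W' \<in> conjs Y y (n + m)"
proof (induct n arbitrary: W)
  case 0 thus ?case using conjs_carrier by auto
next
  case (Suc n)
  then obtain u V where uV: "u \<in> carrier Y" "V \<in> conjs Y y n"
    "W = u \<otimes>\<^bsub>Y\<^esub> y \<otimes>\<^bsub>Y\<^esub> inv\<^bsub>Y\<^esub> u \<otimes>\<^bsub>Y\<^esub> V" by auto
  have V: "V \<in> carrier Y" using conjs_carrier Suc uV by blast
  have W': "W' \<in> carrier Y" using conjs_carrier Suc by blast
  have IH: "V \<otimes>\<^bsub>Y\<^esub> W' \<in> conjs Y y (n + m)" using Suc uV by blast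
  have "W \<otimes>\<^bsub>Y\<^esub> W' = u \<otimes>\<^bsub>Y\<^esub> y \<otimes>\<^bsub>Y\<^esub> inv\<^bsub>Y\<^esub> u \<otimes>\<^bsub>Y\<^esub> (V \<otimes>\<^bsub>Y\<^esub> W')"
    using uV V W' Suc by (simp add: Y.m_assoc)
  thus ?case using IH uV Suc by auto
qed

lemma conjs_pow: "y \<in> carrier Y \<Longrightarrow> y [^]\<^bsub>Y\<^esub> n \<in> conjs Y y n"
proof (induct n)
  case 0 thus ?case by simp
next
  case (Suc n)
  have "y [^]\<^bsub>Y\<^esub> Suc n = \<one>\<^bsub>Y\<^esub> \<otimes>\<^bsub>Y\<^esub> y \<otimes>\<^bsub>Y\<^esub> inv\<^bsub>Y\<^esub> \<one>\<^bsub>Y\<^esub> \<otimes>\<^bsub>Y\<^esub> y [^]\<^bsub>Y\<^esub> n"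
    using Suc Y.nat_pow_Suc2[of y n] by (simp del: nat_pow_Suc)
  thus ?case using Suc by (simp only: conjs.simps) blast
qed

lemma tpow_le_conjs: "y \<in> carrier Y \<Longrightarrow> W \<in> conjs Y y n \<Longrightarrow>
   tpow T (b \<one>\<^bsub>Y\<^esub> y) n \<le> b \<one>\<^bsub>Y\<^esub> W"
proof (induct n arbitrary: W)
  case 0 thus ?case by simp
next
  case (Suc n)
  then obtain u V where uV: "u \<in> carrier Y" "V \<in> conjs Y y n"
    "W = u \<otimes>\<^bsub>Y\<^esub> y \<otimes>\<^bsub>Y\<^esub> inv\<^bsub>Y\<^esub> u \<otimes>\<^bsub>Y\<^esub> V" by auto
  have V: "V \<in> carrier Y" using conjs_carrier Suc uV by blast
  have "tpow T (b \<one>\<^bsub>Y\<^esub> y) (Suc n) \<le> T (b \<one>\<^bsub>Y\<^esub> (u \<otimes>\<^bsub>Y\<^esub> y \<otimes>\<^bsub>Y\<^esub> inv\<^bsub>Y\<^esub> u)) (b \<one>\<^bsub>Y\<^esub> V)"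
    using Suc uV by (simp add: b_N_conj mono_r)
  also have "\<dots> \<le> b \<one>\<^bsub>Y\<^esub> W" using uV V Suc by (simp add: b_N_mult)
  finally show ?case .
qed

end

locale mainloc = vqg +
  fixes y :: 'a
  assumes y: "y \<in> carrier Y"
begin

definition "Zc = range (\<lambda>i::int. y [^]\<^bsub>Y\<^esub> i)"
definition "Zg = Y\<lparr>carrier := Zc\<rparr>"
definition "cZ z z' = Sup {tpow T (b \<one>\<^bsub>Y\<^esub> y) n | n. z' = z \<otimes>\<^bsub>Y\<^esub> y [^]\<^bsub>Y\<^esub> (n::nat)}"
definition "Ag = pb_grp Zg (\<lambda>z. z) (Y \<times>\<times> Y) snd"
definition "aS = prod_str cZ (prod_str b b)"
definition "R p q = Sup {T (b \<one>\<^bsub>Y\<^esub> A) (tpow T (b \<one>\<^bsub>Y\<^esub> y) n) | A W n.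
   A \<in> carrier Y \<and> W \<in> conjs Y y n \<and> fst (snd q) = fst (snd p) \<otimes>\<^bsub>Y\<^esub> A \<otimes>\<^bsub>Y\<^esub> W
   \<and> fst q = fst p \<otimes>\<^bsub>Y\<^esub> y [^]\<^bsub>Y\<^esub> n}"
definition "cS p q = inf (aS p q) (R p q)"

abbreviation "N \<equiv> b \<one>\<^bsub>Y\<^esub> y"

lemma Zc_sub: "Zc \<subseteq> carrier Y" using y by (auto simp: Zc_def)

lemma Zc_comm: "z \<in> Zc \<Longrightarrow> z \<otimes>\<^bsub>Y\<^esub> y [^]\<^bsub>Y\<^esub> (n::nat) = y [^]\<^bsub>Y\<^esub> n \<otimes>\<^bsub>Y\<^esub> z"
proof -
  assume "z \<in> Zc"
  then obtain i where i: "z = y [^]\<^bsub>Y\<^esub> (i::int)" by (auto simp: Zc_def)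
  have "y [^]\<^bsub>Y\<^esub> i \<otimes>\<^bsub>Y\<^esub> y [^]\<^bsub>Y\<^esub> (int n) = y [^]\<^bsub>Y\<^esub> (int n) \<otimes>\<^bsub>Y\<^esub> y [^]\<^bsub>Y\<^esub> i"
    using y by (simp add: Y.int_pow_mult[symmetric] add.commute)
  thus ?thesis using i by (simp add: int_pow_int)
qed

lemma Zc_subgroup: "subgroup Zc Y"
proof (rule Y.subgroupI)
  show "Zc \<subseteq> carrier Y" by (rule Zc_sub)
  show "Zc \<noteq> {}" by (auto simp: Zc_def)
  fix a c assume a: "a \<in> Zc" and c: "c \<in> Zc"
  then obtain i j where "a = y [^]\<^bsub>Y\<^esub> (i::int)" "c = y [^]\<^bsub>Y\<^esub> (j::int)" by (auto simp: Zc_def)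
  thus "inv\<^bsub>Y\<^esub> a \<in> Zc" "a \<otimes>\<^bsub>Y\<^esub> c \<in> Zc" using y
    by (auto simp: Zc_def Y.int_pow_neg[symmetric] Y.int_pow_mult[symmetric])
qed

lemma y_Zc: "y \<in> Zc"
  using y Y.int_pow_1[of y] unfolding Zc_def by (metis rangeI)

lemma one_Zc: "\<one>\<^bsub>Y\<^esub> \<in> Zc"
  unfolding Zc_def by (metis int_pow_0 rangeI)

lemma Zg_group: "group Zg"
  unfolding Zg_def using subgroup.subgroup_is_group[OF Zc_subgroup Y.is_group] .

lemma carrier_Zg [simp]: "carrier Zg = Zc" and mult_Zg [simp]: "mult Zg = mult Y"
  and one_Zg [simp]: "one Zg = one Y"
  by (simp_all add: Zg_def)

lemma carrier_Ag: "carrier Ag = {(z, x). z \<in> Zc \<and> x \<in> carrier Y \<times> carrier Y \<and> z = snd x}"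
  by (simp add: Ag_def pb_grp_def)

lemma mem_Ag [simp]: "(z, (x1, x2)) \<in> carrier Ag \<longleftrightarrow> z \<in> Zc \<and> x1 \<in> carrier Y \<and> x2 \<in> carrier Y \<and> z = x2"
  by (auto simp: carrier_Ag)

lemma mult_Ag [simp]: "(z, (x1, x2)) \<otimes>\<^bsub>Ag\<^esub> (z', (x1', x2')) =
   (z \<otimes>\<^bsub>Y\<^esub> z', (x1 \<otimes>\<^bsub>Y\<^esub> x1', x2 \<otimes>\<^bsub>Y\<^esub> x2'))"
  by (simp add: Ag_def pb_grp_def DirProd_def)

lemma one_Ag [simp]: "\<one>\<^bsub>Ag\<^esub> = (\<one>\<^bsub>Y\<^esub>, (\<one>\<^bsub>Y\<^esub>, \<one>\<^bsub>Y\<^esub>))"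
  by (simp add: Ag_def pb_grp_def DirProd_def)

lemma Ag_group: "group Ag"
proof (rule groupI)
  have S: "subgroup Zc Y" by (rule Zc_subgroup)
  show "\<one>\<^bsub>Ag\<^esub> \<in> carrier Ag" using one_Zc by simp
  fix p q r assume p: "p \<in> carrier Ag" and q: "q \<in> carrier Ag" and r: "r \<in> carrier Ag"
  obtain z x1 x2 where P: "p = (z,(x1,x2))" by (cases p) auto
  obtain z' x1' x2' where Q: "q = (z',(x1',x2'))" by (cases q) auto
  obtain z'' x1'' x2'' where RR: "r = (z'',(x1'',x2''))" by (cases r) auto
  show "p \<otimes>\<^bsub>Ag\<^esub> q \<in> carrier Ag" using p q P Q subgroup.m_closed[OF S] by auto
  show "p \<otimes>\<^bsub>Ag\<^esub> q \<otimes>\<^bsub>Ag\<^esub> r = p \<otimes>\<^bsub>Ag\<^esub> (q \<otimes>\<^bsub>Ag\<^esub> r)"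
    using p q r P Q RR by (simp add: Y.m_assoc)
  show "\<one>\<^bsub>Ag\<^esub> \<otimes>\<^bsub>Ag\<^esub> p = p" using p P by simp
  show "\<exists>s\<in>carrier Ag. s \<otimes>\<^bsub>Ag\<^esub> p = \<one>\<^bsub>Ag\<^esub>"
    using p P subgroup.m_inv_closed[OF S]
    by (intro bexI[of _ "(inv\<^bsub>Y\<^esub> z, (inv\<^bsub>Y\<^esub> x1, inv\<^bsub>Y\<^esub> x2))"]) auto
qed


lemma tpow_le_cZ: "z' = z \<otimes>\<^bsub>Y\<^esub> y [^]\<^bsub>Y\<^esub> (n::nat) \<Longrightarrow> tpow T N n \<le> cZ z z'"
  unfolding cZ_def by (rule Sup_upper) blast

lemma cZ_refl: "z \<in> carrier Y \<Longrightarrow> cZ z z = Orderings.top"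
  using tpow_le_cZ[of z z 0] by (simp add: top_le)

lemma cZ_trans: "z \<in> carrier Y \<Longrightarrow> z' \<in> carrier Y \<Longrightarrow> z'' \<in> carrier Y \<Longrightarrow>
  T (cZ z z') (cZ z' z'') \<le> cZ z z''"
  unfolding cZ_def[of z z'] cZ_def[of z' z'']
proof (rule Sup_le2)
  fix a c assume "a \<in> {tpow T N n |n. z' = z \<otimes>\<^bsub>Y\<^esub> y [^]\<^bsub>Y\<^esub> n}"
    "c \<in> {tpow T N n |n. z'' = z' \<otimes>\<^bsub>Y\<^esub> y [^]\<^bsub>Y\<^esub> n}"
  then obtain n m where nm: "a = tpow T N n" "z' = z \<otimes>\<^bsub>Y\<^esub> y [^]\<^bsub>Y\<^esub> n"
     "c = tpow T N m" "z'' = z' \<otimes>\<^bsub>Y\<^esub> y [^]\<^bsub>Y\<^esub> m" by blast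
  assume "z \<in> carrier Y"
  hence "z'' = z \<otimes>\<^bsub>Y\<^esub> y [^]\<^bsub>Y\<^esub> (n + m)" using nm y by (simp add: Y.m_assoc Y.nat_pow_mult)
  hence "tpow T N (n + m) \<le> cZ z z''" by (rule tpow_le_cZ)
  thus "T a c \<le> cZ z z''" using nm by (simp add: tpow_add)
qed

lemma cZ_comp: "z1 \<in> Zc \<Longrightarrow> z2 \<in> Zc \<Longrightarrow> z1' \<in> Zc \<Longrightarrow> z2' \<in> Zc \<Longrightarrow>
  T (cZ z1 z2) (cZ z1' z2') \<le> cZ (z1 \<otimes>\<^bsub>Y\<^esub> z1') (z2 \<otimes>\<^bsub>Y\<^esub> z2')"
  unfolding cZ_def[of z1 z2] cZ_def[of z1' z2']
proof (rule Sup_le2)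
  fix a c assume "a \<in> {tpow T N n |n. z2 = z1 \<otimes>\<^bsub>Y\<^esub> y [^]\<^bsub>Y\<^esub> n}"
    "c \<in> {tpow T N n |n. z2' = z1' \<otimes>\<^bsub>Y\<^esub> y [^]\<^bsub>Y\<^esub> n}"
  then obtain n m where nm: "a = tpow T N n" "z2 = z1 \<otimes>\<^bsub>Y\<^esub> y [^]\<^bsub>Y\<^esub> n"
     "c = tpow T N m" "z2' = z1' \<otimes>\<^bsub>Y\<^esub> y [^]\<^bsub>Y\<^esub> m" by blast
  assume "z1 \<in> Zc" "z1' \<in> Zc"
  hence c: "z1 \<in> carrier Y" "z1' \<in> carrier Y" using Zc_sub by auto
  have "z2 \<otimes>\<^bsub>Y\<^esub> z2' = z1 \<otimes>\<^bsub>Y\<^esub> (y [^]\<^bsub>Y\<^esub> n \<otimes>\<^bsub>Y\<^esub> z1') \<otimes>\<^bsub>Y\<^esub> y [^]\<^bsub>Y\<^esub> m"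
    using nm c y by (simp add: Y.m_assoc)
  also have "\<dots> = z1 \<otimes>\<^bsub>Y\<^esub> (z1' \<otimes>\<^bsub>Y\<^esub> y [^]\<^bsub>Y\<^esub> n) \<otimes>\<^bsub>Y\<^esub> y [^]\<^bsub>Y\<^esub> m"
    using Zc_comm[OF \<open>z1' \<in> Zc\<close>, of n] by simp
  also have "\<dots> = z1 \<otimes>\<^bsub>Y\<^esub> z1' \<otimes>\<^bsub>Y\<^esub> y [^]\<^bsub>Y\<^esub> (n + m)"
    using c y by (simp add: Y.m_assoc Y.nat_pow_mult[symmetric])
  finally have "tpow T N (n + m) \<le> cZ (z1 \<otimes>\<^bsub>Y\<^esub> z1') (z2 \<otimes>\<^bsub>Y\<^esub> z2')" by (rule tpow_le_cZ)
  thus "T a c \<le> cZ (z1 \<otimes>\<^bsub>Y\<^esub> z1') (z2 \<otimes>\<^bsub>Y\<^esub> z2')" using nm by (simp add: tpow_add)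
qed

lemma cZ_le_b: "z \<in> carrier Y \<Longrightarrow> z' \<in> carrier Y \<Longrightarrow> cZ z z' \<le> b z z'"
  unfolding cZ_def
proof (rule Sup_least)
  fix x assume "x \<in> {tpow T N n |n. z' = z \<otimes>\<^bsub>Y\<^esub> y [^]\<^bsub>Y\<^esub> n}" and z: "z \<in> carrier Y"
  then obtain n where n: "x = tpow T N n" "z' = z \<otimes>\<^bsub>Y\<^esub> y [^]\<^bsub>Y\<^esub> n" by blast
  have "x \<le> b \<one>\<^bsub>Y\<^esub> (y [^]\<^bsub>Y\<^esub> n)" using n tpow_le_conjs[OF y conjs_pow[OF y]] by simp
  also have "\<dots> = b z z'" using n z y b_lt[of z "\<one>\<^bsub>Y\<^esub>" "y [^]\<^bsub>Y\<^esub> n"] by simp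
  finally show "x \<le> b z z'" .
qed

lemma Zg_vgrp: "vgrp T Orderings.top Zg cZ"
  unfolding vgrp_def vcat_def using Zg_group Zc_sub
  by (auto simp: cZ_refl cZ_trans cZ_comp subset_iff)

lemma Zg_vhom: "vhom Zg cZ Y b (\<lambda>z. z)"
  unfolding vhom_def hom_def using Zc_sub by (auto simp: cZ_le_b subset_iff)


lemma inf3_T: "T (inf a (inf c d)) (inf a' (inf c' d')) \<le> inf (T a a') (inf (T c c') (T d d'))"
  by (simp add: mono le_infI1 le_infI2)

lemma inf2_T: "T (inf a c) (inf a' c') \<le> inf (T a a') (T c c')"
  by (simp add: mono le_infI1 le_infI2)

lemma aS_simp [simp]: "aS (z, (x1, x2)) (z', (x1', x2')) = inf (cZ z z') (inf (b x1 x1') (b x2 x2'))"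
  by (simp add: aS_def prod_str_def)

lemma Ag_vgrp_aS: "vgrp T Orderings.top Ag aS"
proof -
  have refl: "Orderings.top \<le> aS p p" if "p \<in> carrier Ag" for p
    using that Zc_sub by (auto simp: carrier_Ag cZ_refl)
  have trans: "T (aS p q) (aS q r) \<le> aS p r" if "p \<in> carrier Ag" "q \<in> carrier Ag" "r \<in> carrier Ag" for p q r
  proof -
    obtain z x1 x2 where P: "p = (z,(x1,x2))" by (cases p) auto
    obtain z' x1' x2' where Q: "q = (z',(x1',x2'))" by (cases q) auto
    obtain z'' x1'' x2'' where RR: "r = (z'',(x1'',x2''))" by (cases r) auto
    have "T (aS p q) (aS q r) \<le> inf (T (cZ z z') (cZ z' z'')) (inf (T (b x1 x1') (b x1' x1'')) (T (b x2 x2') (b x2' x2'')))"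
      using P Q RR inf3_T by simp
    also have "\<dots> \<le> aS p r" using that P Q RR Zc_sub
      by (simp add: inf.coboundedI1 inf.coboundedI2 cZ_trans b_trans subset_iff le_infI1 le_infI2)
    finally show ?thesis .
  qed
  have comp: "T (aS p q) (aS p' q') \<le> aS (p \<otimes>\<^bsub>Ag\<^esub> p') (q \<otimes>\<^bsub>Ag\<^esub> q')"
    if "p \<in> carrier Ag" "q \<in> carrier Ag" "p' \<in> carrier Ag" "q' \<in> carrier Ag" for p q p' q'
  proof -
    obtain z x1 x2 where P: "p = (z,(x1,x2))" by (cases p) auto
    obtain z' x1' x2' where Q: "q = (z',(x1',x2'))" by (cases q) auto
    obtain w u1 u2 where P': "p' = (w,(u1,u2))" by (cases p') auto
    obtain w' u1' u2' where Q': "q' = (w',(u1',u2'))" by (cases q') auto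
    have "T (aS p q) (aS p' q') \<le> inf (T (cZ z z') (cZ w w')) (inf (T (b x1 x1') (b u1 u1')) (T (b x2 x2') (b u2 u2')))"
      using P Q P' Q' inf3_T that by simp
    also have "\<dots> \<le> aS (p \<otimes>\<^bsub>Ag\<^esub> p') (q \<otimes>\<^bsub>Ag\<^esub> q')"
    proof -
      have zz: "z \<in> Zc" "z' \<in> Zc" "w \<in> Zc" "w' \<in> Zc" using that P Q P' Q' by auto
      have cc: "x1 \<in> carrier Y" "x1' \<in> carrier Y" "u1 \<in> carrier Y" "u1' \<in> carrier Y"
        "x2 \<in> carrier Y" "x2' \<in> carrier Y" "u2 \<in> carrier Y" "u2' \<in> carrier Y"
        using that P Q P' Q' by auto
      have 1: "T (cZ z z') (cZ w w') \<le> cZ (z \<otimes>\<^bsub>Y\<^esub> w) (z' \<otimes>\<^bsub>Y\<^esub> w')" by (rule cZ_comp[OF zz])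
      have 2: "T (b x1 x1') (b u1 u1') \<le> b (x1 \<otimes>\<^bsub>Y\<^esub> u1) (x1' \<otimes>\<^bsub>Y\<^esub> u1')" using cc by (simp add: b_comp)
      have 3: "T (b x2 x2') (b u2 u2') \<le> b (x2 \<otimes>\<^bsub>Y\<^esub> u2) (x2' \<otimes>\<^bsub>Y\<^esub> u2')" using cc by (simp add: b_comp)
      show ?thesis using P Q P' Q' 1 2 3 by (auto intro: le_infI1 le_infI2)
    qed
    finally show ?thesis .
  qed
  show ?thesis unfolding vgrp_def vcat_def using Ag_group refl trans comp by blast
qed

lemma R_ge: "A \<in> carrier Y \<Longrightarrow> W \<in> conjs Y y n \<Longrightarrow> q1 = p1 \<otimes>\<^bsub>Y\<^esub> A \<otimes>\<^bsub>Y\<^esub> W \<Longrightarrow>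
  qz = pz \<otimes>\<^bsub>Y\<^esub> y [^]\<^bsub>Y\<^esub> n \<Longrightarrow> T (b \<one>\<^bsub>Y\<^esub> A) (tpow T N n) \<le> R (pz, (p1, p2)) (qz, (q1, q2))"
  unfolding R_def by (rule Sup_upper) auto

lemma R_elim: "x \<in> {T (b \<one>\<^bsub>Y\<^esub> A) (tpow T N n) | A W n.
   A \<in> carrier Y \<and> W \<in> conjs Y y n \<and> fst (snd q) = fst (snd p) \<otimes>\<^bsub>Y\<^esub> A \<otimes>\<^bsub>Y\<^esub> W
   \<and> fst q = fst p \<otimes>\<^bsub>Y\<^esub> y [^]\<^bsub>Y\<^esub> n} \<Longrightarrow>
  (\<And>A W n. x = T (b \<one>\<^bsub>Y\<^esub> A) (tpow T N n) \<Longrightarrow> A \<in> carrier Y \<Longrightarrow> W \<in> conjs Y y n \<Longrightarrow>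
     fst (snd q) = fst (snd p) \<otimes>\<^bsub>Y\<^esub> A \<otimes>\<^bsub>Y\<^esub> W \<Longrightarrow> fst q = fst p \<otimes>\<^bsub>Y\<^esub> y [^]\<^bsub>Y\<^esub> n \<Longrightarrow> P) \<Longrightarrow> P"
  by blast

lemma R_trans: "p \<in> carrier Ag \<Longrightarrow> q \<in> carrier Ag \<Longrightarrow> r \<in> carrier Ag \<Longrightarrow> T (R p q) (R q r) \<le> R p r"
  unfolding R_def[of p q] R_def[of q r]
proof (rule Sup_le2)
  fix x x' assume p: "p \<in> carrier Ag" and q: "q \<in> carrier Ag" and r: "r \<in> carrier Ag"
  assume x: "x \<in> {T (b \<one>\<^bsub>Y\<^esub> A) (tpow T N n) | A W n.
   A \<in> carrier Y \<and> W \<in> conjs Y y n \<and> fst (snd q) = fst (snd p) \<otimes>\<^bsub>Y\<^esub> A \<otimes>\<^bsub>Y\<^esub> W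
   \<and> fst q = fst p \<otimes>\<^bsub>Y\<^esub> y [^]\<^bsub>Y\<^esub> n}"
  assume x': "x' \<in> {T (b \<one>\<^bsub>Y\<^esub> A) (tpow T N n) | A W n.
   A \<in> carrier Y \<and> W \<in> conjs Y y n \<and> fst (snd r) = fst (snd q) \<otimes>\<^bsub>Y\<^esub> A \<otimes>\<^bsub>Y\<^esub> W
   \<and> fst r = fst q \<otimes>\<^bsub>Y\<^esub> y [^]\<^bsub>Y\<^esub> n}"
  obtain z x1 x2 where P: "p = (z,(x1,x2))" by (cases p) auto
  obtain z' x1' x2' where Q: "q = (z',(x1',x2'))" by (cases q) auto
  obtain z'' x1'' x2'' where RR: "r = (z'',(x1'',x2''))" by (cases r) auto
  have cz: "z \<in> carrier Y" "x1 \<in> carrier Y" using p P Zc_sub by auto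
  obtain A W n where w: "x = T (b \<one>\<^bsub>Y\<^esub> A) (tpow T N n)" "A \<in> carrier Y" "W \<in> conjs Y y n"
    "x1' = x1 \<otimes>\<^bsub>Y\<^esub> A \<otimes>\<^bsub>Y\<^esub> W" "z' = z \<otimes>\<^bsub>Y\<^esub> y [^]\<^bsub>Y\<^esub> n"
    using x P Q by (auto elim!: R_elim)
  obtain A' W' n' where w': "x' = T (b \<one>\<^bsub>Y\<^esub> A') (tpow T N n')" "A' \<in> carrier Y" "W' \<in> conjs Y y n'"
    "x1'' = x1' \<otimes>\<^bsub>Y\<^esub> A' \<otimes>\<^bsub>Y\<^esub> W'" "z'' = z' \<otimes>\<^bsub>Y\<^esub> y [^]\<^bsub>Y\<^esub> n'"
    using x' RR Q by (auto elim!: R_elim)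
  have Wc: "W \<in> carrier Y" "W' \<in> carrier Y" using w w' conjs_carrier y by auto
  define W'' where "W'' = inv\<^bsub>Y\<^esub> A' \<otimes>\<^bsub>Y\<^esub> W \<otimes>\<^bsub>Y\<^esub> A' \<otimes>\<^bsub>Y\<^esub> W'"
  have c1: "inv\<^bsub>Y\<^esub> A' \<otimes>\<^bsub>Y\<^esub> W \<otimes>\<^bsub>Y\<^esub> A' \<in> conjs Y y n"
    using conjs_conj[OF y _ w(3), of "inv\<^bsub>Y\<^esub> A'"] w'(2) by simp
  have W'': "W'' \<in> conjs Y y (n + n')"
    unfolding W''_def by (rule conjs_mult[OF y c1 w'(3)])
  have e1: "x1'' = x1 \<otimes>\<^bsub>Y\<^esub> (A \<otimes>\<^bsub>Y\<^esub> A') \<otimes>\<^bsub>Y\<^esub> W''"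
    unfolding W''_def using w w' Wc cz by (simp add: Y.m_assoc)
  have e2: "z'' = z \<otimes>\<^bsub>Y\<^esub> y [^]\<^bsub>Y\<^esub> (n + n')"
    using w w' cz y by (simp add: Y.m_assoc Y.nat_pow_mult)
  have "T x x' = T (T (b \<one>\<^bsub>Y\<^esub> A) (b \<one>\<^bsub>Y\<^esub> A')) (tpow T N (n + n'))"
    using w w' by (simp add: tpow_add ac_simps)
  also have "\<dots> \<le> T (b \<one>\<^bsub>Y\<^esub> (A \<otimes>\<^bsub>Y\<^esub> A')) (tpow T N (n + n'))"
    using w w' by (simp add: mono b_N_mult)
  also have "\<dots> \<le> R (z,(x1,x2)) (z'',(x1'',x2''))"
    using R_ge[OF _ W'' e1 e2] w w' by simp
  finally show "T x x' \<le> R p r" using P RR by simp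
qed


lemma R_comp: "p \<in> carrier Ag \<Longrightarrow> q \<in> carrier Ag \<Longrightarrow> p' \<in> carrier Ag \<Longrightarrow> q' \<in> carrier Ag \<Longrightarrow>
  T (R p q) (R p' q') \<le> R (p \<otimes>\<^bsub>Ag\<^esub> p') (q \<otimes>\<^bsub>Ag\<^esub> q')"
  unfolding R_def[of p q] R_def[of p' q']
proof (rule Sup_le2)
  fix x x' assume p: "p \<in> carrier Ag" and q: "q \<in> carrier Ag" and p': "p' \<in> carrier Ag" and q': "q' \<in> carrier Ag"
  assume x: "x \<in> {T (b \<one>\<^bsub>Y\<^esub> A) (tpow T N n) | A W n.
   A \<in> carrier Y \<and> W \<in> conjs Y y n \<and> fst (snd q) = fst (snd p) \<otimes>\<^bsub>Y\<^esub> A \<otimes>\<^bsub>Y\<^esub> W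
   \<and> fst q = fst p \<otimes>\<^bsub>Y\<^esub> y [^]\<^bsub>Y\<^esub> n}"
  assume x': "x' \<in> {T (b \<one>\<^bsub>Y\<^esub> A) (tpow T N n) | A W n.
   A \<in> carrier Y \<and> W \<in> conjs Y y n \<and> fst (snd q') = fst (snd p') \<otimes>\<^bsub>Y\<^esub> A \<otimes>\<^bsub>Y\<^esub> W
   \<and> fst q' = fst p' \<otimes>\<^bsub>Y\<^esub> y [^]\<^bsub>Y\<^esub> n}"
  obtain z x1 x2 where P: "p = (z,(x1,x2))" by (cases p) auto
  obtain z' x1' x2' where Q: "q = (z',(x1',x2'))" by (cases q) auto
  obtain w u1 u2 where P': "p' = (w,(u1,u2))" by (cases p') auto
  obtain w' u1' u2' where Q': "q' = (w',(u1',u2'))" by (cases q') auto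
  have cz: "z \<in> carrier Y" "x1 \<in> carrier Y" "w \<in> carrier Y" "u1 \<in> carrier Y" "w \<in> Zc"
    using p P p' P' Zc_sub by auto
  obtain A W n where wt: "x = T (b \<one>\<^bsub>Y\<^esub> A) (tpow T N n)" "A \<in> carrier Y" "W \<in> conjs Y y n"
    "x1' = x1 \<otimes>\<^bsub>Y\<^esub> A \<otimes>\<^bsub>Y\<^esub> W" "z' = z \<otimes>\<^bsub>Y\<^esub> y [^]\<^bsub>Y\<^esub> n"
    using x P Q by (auto elim!: R_elim)
  obtain A' W' n' where wt': "x' = T (b \<one>\<^bsub>Y\<^esub> A') (tpow T N n')" "A' \<in> carrier Y" "W' \<in> conjs Y y n'"
    "u1' = u1 \<otimes>\<^bsub>Y\<^esub> A' \<otimes>\<^bsub>Y\<^esub> W'" "w' = w \<otimes>\<^bsub>Y\<^esub> y [^]\<^bsub>Y\<^esub> n'"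
    using x' P' Q' by (auto elim!: R_elim)
  have Wc: "W \<in> carrier Y" "W' \<in> carrier Y" using wt wt' conjs_carrier y by auto
  define t where "t = inv\<^bsub>Y\<^esub> A' \<otimes>\<^bsub>Y\<^esub> inv\<^bsub>Y\<^esub> u1"
  have tc: "t \<in> carrier Y" using t_def wt' cz by simp
  have it: "inv\<^bsub>Y\<^esub> t = u1 \<otimes>\<^bsub>Y\<^esub> A'" using t_def wt' cz by (simp add: Y.inv_mult_group)
  define W'' where "W'' = t \<otimes>\<^bsub>Y\<^esub> W \<otimes>\<^bsub>Y\<^esub> inv\<^bsub>Y\<^esub> t \<otimes>\<^bsub>Y\<^esub> W'"
  define A'' where "A'' = inv\<^bsub>Y\<^esub> u1 \<otimes>\<^bsub>Y\<^esub> A \<otimes>\<^bsub>Y\<^esub> u1 \<otimes>\<^bsub>Y\<^esub> A'"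
  have W'': "W'' \<in> conjs Y y (n + n')"
    unfolding W''_def by (rule conjs_mult[OF y conjs_conj[OF y tc wt(3)] wt'(3)])
  have A'': "A'' \<in> carrier Y" using A''_def wt wt' cz by simp
  have e1: "x1' \<otimes>\<^bsub>Y\<^esub> u1' = (x1 \<otimes>\<^bsub>Y\<^esub> u1) \<otimes>\<^bsub>Y\<^esub> A'' \<otimes>\<^bsub>Y\<^esub> W''"
    unfolding W''_def A''_def it using wt wt' Wc cz by (simp add: t_def Y.m_assoc)
  have e2: "z' \<otimes>\<^bsub>Y\<^esub> w' = (z \<otimes>\<^bsub>Y\<^esub> w) \<otimes>\<^bsub>Y\<^esub> y [^]\<^bsub>Y\<^esub> (n + n')"
  proof -
    have "z' \<otimes>\<^bsub>Y\<^esub> w' = z \<otimes>\<^bsub>Y\<^esub> (y [^]\<^bsub>Y\<^esub> n \<otimes>\<^bsub>Y\<^esub> w) \<otimes>\<^bsub>Y\<^esub> y [^]\<^bsub>Y\<^esub> n'"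
      using wt wt' cz y by (simp add: Y.m_assoc)
    also have "\<dots> = z \<otimes>\<^bsub>Y\<^esub> (w \<otimes>\<^bsub>Y\<^esub> y [^]\<^bsub>Y\<^esub> n) \<otimes>\<^bsub>Y\<^esub> y [^]\<^bsub>Y\<^esub> n'"
      using Zc_comm[OF cz(5), of n] by simp
    also have "\<dots> = (z \<otimes>\<^bsub>Y\<^esub> w) \<otimes>\<^bsub>Y\<^esub> y [^]\<^bsub>Y\<^esub> (n + n')"
      using cz y by (simp add: Y.m_assoc Y.nat_pow_mult[symmetric])
    finally show ?thesis .
  qed
  have "T x x' = T (T (b \<one>\<^bsub>Y\<^esub> A) (b \<one>\<^bsub>Y\<^esub> A')) (tpow T N (n + n'))"
    using wt wt' by (simp add: tpow_add ac_simps)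
  also have "\<dots> \<le> T (b \<one>\<^bsub>Y\<^esub> A'') (tpow T N (n + n'))"
  proof (rule mono)
    have "b \<one>\<^bsub>Y\<^esub> A = b \<one>\<^bsub>Y\<^esub> (inv\<^bsub>Y\<^esub> u1 \<otimes>\<^bsub>Y\<^esub> A \<otimes>\<^bsub>Y\<^esub> u1)"
      using b_N_conj[of "inv\<^bsub>Y\<^esub> u1" A] wt cz by simp
    thus "T (b \<one>\<^bsub>Y\<^esub> A) (b \<one>\<^bsub>Y\<^esub> A') \<le> b \<one>\<^bsub>Y\<^esub> A''"
      unfolding A''_def using b_N_mult[of "inv\<^bsub>Y\<^esub> u1 \<otimes>\<^bsub>Y\<^esub> A \<otimes>\<^bsub>Y\<^esub> u1" A'] wt wt' cz by simp
  qed simp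
  also have "\<dots> \<le> R (z \<otimes>\<^bsub>Y\<^esub> w, (x1 \<otimes>\<^bsub>Y\<^esub> u1, x2 \<otimes>\<^bsub>Y\<^esub> u2)) (z' \<otimes>\<^bsub>Y\<^esub> w', (x1' \<otimes>\<^bsub>Y\<^esub> u1', x2' \<otimes>\<^bsub>Y\<^esub> u2'))"
    by (rule R_ge[OF A'' W'' e1 e2])
  finally show "T x x' \<le> R (p \<otimes>\<^bsub>Ag\<^esub> p') (q \<otimes>\<^bsub>Ag\<^esub> q')" using P Q P' Q' by simp
qed

lemma R_refl: "p \<in> carrier Ag \<Longrightarrow> R p p = Orderings.top"
proof -
  assume p: "p \<in> carrier Ag"
  obtain z x1 x2 where P: "p = (z,(x1,x2))" by (cases p) auto
  have c: "z \<in> carrier Y" "x1 \<in> carrier Y" using p P Zc_sub by auto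
  have "T (b \<one>\<^bsub>Y\<^esub> \<one>\<^bsub>Y\<^esub>) (tpow T N 0) \<le> R (z,(x1,x2)) (z,(x1,x2))"
    by (rule R_ge) (use c in auto)
  thus ?thesis using P by (simp add: top_le)
qed

lemma Ag_vgrp_cS: "vgrp T Orderings.top Ag cS"
proof -
  have A: "group Ag" "\<forall>x\<in>carrier Ag. Orderings.top \<le> aS x x"
    "\<forall>x\<in>carrier Ag. \<forall>x'\<in>carrier Ag. \<forall>x''\<in>carrier Ag. T (aS x x') (aS x' x'') \<le> aS x x''"
    "\<forall>x1\<in>carrier Ag. \<forall>x2\<in>carrier Ag. \<forall>x1'\<in>carrier Ag. \<forall>x2'\<in>carrier Ag.
        T (aS x1 x2) (aS x1' x2') \<le> aS (x1 \<otimes>\<^bsub>Ag\<^esub> x1') (x2 \<otimes>\<^bsub>Ag\<^esub> x2')"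
    using Ag_vgrp_aS unfolding vgrp_def vcat_def by auto
  show ?thesis unfolding vgrp_def vcat_def cS_def
  proof (intro conjI ballI)
    show "group Ag" by (rule A(1))
    fix p assume "p \<in> carrier Ag" thus "Orderings.top \<le> inf (aS p p) (R p p)" using A R_refl by simp
  next
    fix p q r assume h: "p \<in> carrier Ag" "q \<in> carrier Ag" "r \<in> carrier Ag"
    have "T (inf (aS p q) (R p q)) (inf (aS q r) (R q r)) \<le> inf (T (aS p q) (aS q r)) (T (R p q) (R q r))"
      by (rule inf2_T)
    also have "\<dots> \<le> inf (aS p r) (R p r)" using A(3) R_trans h by (meson inf_mono)
    finally show "T (inf (aS p q) (R p q)) (inf (aS q r) (R q r)) \<le> inf (aS p r) (R p r)" .
  next
    fix p q p' q' assume h: "p \<in> carrier Ag" "q \<in> carrier Ag" "p' \<in> carrier Ag" "q' \<in> carrier Ag"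
    have "T (inf (aS p q) (R p q)) (inf (aS p' q') (R p' q')) \<le> inf (T (aS p q) (aS p' q')) (T (R p q) (R p' q'))"
      by (rule inf2_T)
    also have "\<dots> \<le> inf (aS (p \<otimes>\<^bsub>Ag\<^esub> p') (q \<otimes>\<^bsub>Ag\<^esub> q')) (R (p \<otimes>\<^bsub>Ag\<^esub> p') (q \<otimes>\<^bsub>Ag\<^esub> q'))"
      using A(4) R_comp h by (meson inf_mono)
    finally show "T (inf (aS p q) (R p q)) (inf (aS p' q') (R p' q')) \<le>
      inf (aS (p \<otimes>\<^bsub>Ag\<^esub> p') (q \<otimes>\<^bsub>Ag\<^esub> q')) (R (p \<otimes>\<^bsub>Ag\<^esub> p') (q \<otimes>\<^bsub>Ag\<^esub> q'))" .
  qed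
qed


lemma carrier_K: "carrier (vkernel Ag Zg fst) = {p \<in> carrier Ag. fst p = \<one>\<^bsub>Y\<^esub>}"
  by (simp add: vkernel_def kernel_def)

lemma mult_K: "mult (vkernel Ag Zg fst) = mult Ag"
  by (simp add: vkernel_def)

lemma K_vhom: "vhom (vkernel Ag Zg fst) aS Ag cS (\<lambda>x. x)"
  unfolding vhom_def
proof (intro conjI ballI)
  show "(\<lambda>x. x) \<in> hom (vkernel Ag Zg fst) Ag" unfolding hom_def carrier_K mult_K by auto
  fix p q assume "p \<in> carrier (vkernel Ag Zg fst)" "q \<in> carrier (vkernel Ag Zg fst)"
  hence p: "p \<in> carrier Ag" "fst p = \<one>\<^bsub>Y\<^esub>" and q: "q \<in> carrier Ag" "fst q = \<one>\<^bsub>Y\<^esub>"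
    unfolding carrier_K by auto
  obtain z x1 x2 where P: "p = (z,(x1,x2))" by (cases p) auto
  obtain z' x1' x2' where Q: "q = (z',(x1',x2'))" by (cases q) auto
  have c: "x1 \<in> carrier Y" "x1' \<in> carrier Y" "z = \<one>\<^bsub>Y\<^esub>" "z' = \<one>\<^bsub>Y\<^esub>" "x2 = \<one>\<^bsub>Y\<^esub>" "x2' = \<one>\<^bsub>Y\<^esub>"
    using p q P Q by auto
  have "T (b \<one>\<^bsub>Y\<^esub> (inv\<^bsub>Y\<^esub> x1 \<otimes>\<^bsub>Y\<^esub> x1')) (tpow T N 0) \<le> R (z,(x1,x2)) (z',(x1',x2'))"
    by (rule R_ge) (use c in \<open>auto simp: Y.m_assoc\<close>)
  hence "b x1 x1' \<le> R p q" using P Q c b_N[of x1 x1'] by simp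
  moreover have "aS p q \<le> b x1 x1'" using P Q by (simp add: inf.coboundedI2)
  ultimately have "aS p q \<le> R p q" by (rule order_trans[rotated])
  thus "aS p q \<le> cS ((\<lambda>x. x) p) ((\<lambda>x. x) q)" unfolding cS_def by simp
qed

lemma sec_vhom: "vhom Zg cZ Ag cS (\<lambda>z. (z, (z, z)))"
  unfolding vhom_def
proof (intro conjI ballI)
  show "(\<lambda>z. (z, (z, z))) \<in> hom Zg Ag" unfolding hom_def using Zc_sub by auto
  fix z z' assume "z \<in> carrier Zg" "z' \<in> carrier Zg"
  hence zz: "z \<in> Zc" "z' \<in> Zc" "z \<in> carrier Y" "z' \<in> carrier Y" using Zc_sub by auto
  have 1: "cZ z z' \<le> b z z'" using zz cZ_le_b by simp
  have 2: "cZ z z' \<le> R (z,(z,z)) (z',(z',z'))"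
    unfolding cZ_def
  proof (rule Sup_least)
    fix x assume "x \<in> {tpow T N n |n. z' = z \<otimes>\<^bsub>Y\<^esub> y [^]\<^bsub>Y\<^esub> n}"
    then obtain n where n: "x = tpow T N n" "z' = z \<otimes>\<^bsub>Y\<^esub> y [^]\<^bsub>Y\<^esub> n" by blast
    have "T (b \<one>\<^bsub>Y\<^esub> \<one>\<^bsub>Y\<^esub>) (tpow T N n) \<le> R (z,(z,z)) (z',(z',z'))"
      by (rule R_ge[OF _ conjs_pow[OF y]]) (use n zz y in auto)
    thus "x \<le> R (z,(z,z)) (z',(z',z'))" using n by simp
  qed
  show "cZ z z' \<le> cS (z, (z, z)) (z', (z', z'))" unfolding cS_def using 1 2 by simp
qed

lemma id_vmono: "vmono T Orderings.top Ag cS Ag aS (\<lambda>x. x)"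
  unfolding vmono_def
proof (intro conjI allI impI)
  show "vhom Ag cS Ag aS (\<lambda>x. x)" unfolding vhom_def hom_def cS_def by simp
  fix W :: "('a \<times> 'a \<times> 'a) monoid" and w u v
  assume "vgrp T Orderings.top W w \<and> vhom W w Ag cS u \<and> vhom W w Ag cS v \<and> (\<forall>x\<in>carrier W. u x = v x)"
  thus "\<forall>x\<in>carrier W. u x = v x" by blast
qed

lemma a_le_R: "strongly_unital T Orderings.top Y b \<Longrightarrow> p \<in> carrier Ag \<Longrightarrow> q \<in> carrier Ag \<Longrightarrow> aS p q \<le> R p q"
proof -
  assume su: "strongly_unital T Orderings.top Y b" and p: "p \<in> carrier Ag" and q: "q \<in> carrier Ag"
  have "strong_point T Orderings.top (pb_grp Zg (\<lambda>z. z) (Y \<times>\<times> Y) snd) (prod_str cZ (prod_str b b)) Zg cZ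
          fst (\<lambda>z. (z, ((\<lambda>z. z) z, (\<lambda>z. z) z)))"
    using mp[OF su[unfolded strongly_unital_def, THEN spec[of _ Zg], THEN spec[of _ cZ], THEN spec[of _ "\<lambda>z. z"]]
      conjI[OF Zg_vgrp Zg_vhom]] by simp
  hence "strong_point T Orderings.top Ag aS Zg cZ fst (\<lambda>z. (z, (z, z)))"
    unfolding Ag_def aS_def by simp
  hence "jointly_strong_epi T Orderings.top (vkernel Ag Zg fst) aS (\<lambda>x. x) Zg cZ (\<lambda>z. (z, (z, z))) Ag aS"
    unfolding strong_point_def .
  hence "viso Ag cS Ag aS (\<lambda>x. x)"
    unfolding jointly_strong_epi_def using Ag_vgrp_cS id_vmono K_vhom sec_vhom by blast
  then obtain n where n: "vhom Ag aS Ag cS n" "\<forall>x\<in>carrier Ag. n x = x"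
    unfolding viso_def by auto
  have "aS p q \<le> cS (n p) (n q)" using n(1) p q unfolding vhom_def by blast
  thus ?thesis using n(2) p q unfolding cS_def by (simp add: le_infI2)
qed

lemma final_upper: "R (\<one>\<^bsub>Y\<^esub>, (\<one>\<^bsub>Y\<^esub>, \<one>\<^bsub>Y\<^esub>)) (y, (\<one>\<^bsub>Y\<^esub>, y)) \<le> T (b y \<one>\<^bsub>Y\<^esub>) N"
  unfolding R_def
proof (rule Sup_least)
  fix x assume "x \<in> {T (b \<one>\<^bsub>Y\<^esub> A) (tpow T N n) | A W n.
   A \<in> carrier Y \<and> W \<in> conjs Y y n \<and> fst (snd (y, (\<one>\<^bsub>Y\<^esub>, y))) = fst (snd (\<one>\<^bsub>Y\<^esub>, (\<one>\<^bsub>Y\<^esub>, \<one>\<^bsub>Y\<^esub>))) \<otimes>\<^bsub>Y\<^esub> A \<otimes>\<^bsub>Y\<^esub> W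
   \<and> fst (y, (\<one>\<^bsub>Y\<^esub>, y)) = fst (\<one>\<^bsub>Y\<^esub>, (\<one>\<^bsub>Y\<^esub>, \<one>\<^bsub>Y\<^esub>)) \<otimes>\<^bsub>Y\<^esub> y [^]\<^bsub>Y\<^esub> n}"
  then obtain A W n where w: "x = T (b \<one>\<^bsub>Y\<^esub> A) (tpow T N n)" "A \<in> carrier Y" "W \<in> conjs Y y n"
    "A \<otimes>\<^bsub>Y\<^esub> W = \<one>\<^bsub>Y\<^esub>" "y [^]\<^bsub>Y\<^esub> n = y"
    using y by auto
  have Wc: "W \<in> carrier Y" using w conjs_carrier y by auto
  show "x \<le> T (b y \<one>\<^bsub>Y\<^esub>) N"
  proof (cases n)
    case 0
    hence "y = \<one>\<^bsub>Y\<^esub>" using w(5) by simp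
    thus ?thesis using w(1) 0 by (simp add: le_r)
  next
    case (Suc m)
    show ?thesis
    proof (cases m)
      case 0
      then obtain u where u: "u \<in> carrier Y" "W = u \<otimes>\<^bsub>Y\<^esub> y \<otimes>\<^bsub>Y\<^esub> inv\<^bsub>Y\<^esub> u \<otimes>\<^bsub>Y\<^esub> \<one>\<^bsub>Y\<^esub>"
        using w(3) Suc by auto
      have "A = inv\<^bsub>Y\<^esub> W" using w(2,4) Wc by (metis Y.inv_equality)
      hence "b \<one>\<^bsub>Y\<^esub> A = b W \<one>\<^bsub>Y\<^esub>" using Wc b_inv_swap by simp
      also have "\<dots> = b (u \<otimes>\<^bsub>Y\<^esub> y \<otimes>\<^bsub>Y\<^esub> inv\<^bsub>Y\<^esub> u) (u \<otimes>\<^bsub>Y\<^esub> \<one>\<^bsub>Y\<^esub> \<otimes>\<^bsub>Y\<^esub> inv\<^bsub>Y\<^esub> u)"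
        using u y by simp
      also have "\<dots> = b y \<one>\<^bsub>Y\<^esub>" using b_conj[of u y "\<one>\<^bsub>Y\<^esub>"] u y by simp
      finally show ?thesis using w(1) Suc 0 by simp
    next
      case (Suc k)
      have "y [^]\<^bsub>Y\<^esub> k \<otimes>\<^bsub>Y\<^esub> y \<otimes>\<^bsub>Y\<^esub> y = \<one>\<^bsub>Y\<^esub> \<otimes>\<^bsub>Y\<^esub> y"
        using w(5) \<open>n = Suc m\<close> Suc y by (simp add: Y.m_assoc)
      hence "y [^]\<^bsub>Y\<^esub> k \<otimes>\<^bsub>Y\<^esub> y = \<one>\<^bsub>Y\<^esub>" using y by (metis Y.m_closed Y.nat_pow_closed Y.one_closed Y.right_cancel)
      hence yk: "y [^]\<^bsub>Y\<^esub> k = inv\<^bsub>Y\<^esub> y" using y by (metis Y.inv_equality Y.nat_pow_closed)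
      have "tpow T N k \<le> b y \<one>\<^bsub>Y\<^esub>"
        using tpow_le_conjs[OF y conjs_pow[OF y, of k]] yk b_inv_swap[OF y] by simp
      hence "T N (tpow T N k) \<le> T (b y \<one>\<^bsub>Y\<^esub>) N" by (metis comm mono order_refl)
      moreover have "x \<le> T N (tpow T N k)"
      proof -
        have "x = T (b \<one>\<^bsub>Y\<^esub> A) (T N (T N (tpow T N k)))"
          using w(1) \<open>n = Suc m\<close> Suc by simp
        hence "x \<le> T N (T N (tpow T N k))" by (simp add: le_r)
        also have "\<dots> \<le> T N (tpow T N k)" by (rule le_r)
        finally show ?thesis .
      qed
      ultimately show ?thesis by (rule order_trans[rotated])
    qed
  qed
qed

lemma final_lower: "N \<le> aS (\<one>\<^bsub>Y\<^esub>, (\<one>\<^bsub>Y\<^esub>, \<one>\<^bsub>Y\<^esub>)) (y, (\<one>\<^bsub>Y\<^esub>, y))"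
proof -
  have "tpow T N 1 \<le> cZ \<one>\<^bsub>Y\<^esub> y" by (rule tpow_le_cZ) (use y in simp)
  thus ?thesis using y by simp
qed

lemma main: "strongly_unital T Orderings.top Y b \<Longrightarrow> N \<le> T (b y \<one>\<^bsub>Y\<^esub>) N"
proof -
  assume su: "strongly_unital T Orderings.top Y b"
  have m: "(\<one>\<^bsub>Y\<^esub>, (\<one>\<^bsub>Y\<^esub>, \<one>\<^bsub>Y\<^esub>)) \<in> carrier Ag" "(y, (\<one>\<^bsub>Y\<^esub>, y)) \<in> carrier Ag"
    using one_Zc y_Zc y by auto
  show ?thesis by (rule order_trans[OF final_lower order_trans[OF a_le_R[OF su m] final_upper]])
qed

end

theorem proposition6p4:
  fixes T :: "'v::complete_lattice \<Rightarrow> 'v \<Rightarrow> 'v" and k :: 'v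
    and Y :: "'a monoid" and b :: "'a \<Rightarrow> 'a \<Rightarrow> 'v" and y :: 'a
  assumes "comm_unital_quantale T k"
    and "is_frame TYPE('v)"
    and "k = (Orderings.top :: 'v)"
    and "vgrp T k Y b"
    and "strongly_unital T k Y b"
    and "y \<in> carrier Y"
  shows "b \<one>\<^bsub>Y\<^esub> y = T (b y \<one>\<^bsub>Y\<^esub>) (b \<one>\<^bsub>Y\<^esub> y)"
proof -
  interpret M: mainloc T Y b y
    using assms unfolding mainloc_def mainloc_axioms_def vqg_def vqg_axioms_def vq_def by simp
  have "b \<one>\<^bsub>Y\<^esub> y \<le> T (b y \<one>\<^bsub>Y\<^esub>) (b \<one>\<^bsub>Y\<^esub> y)"
    using M.main assms by simp
  moreover have "T (b y \<one>\<^bsub>Y\<^esub>) (b \<one>\<^bsub>Y\<^esub> y) \<le> b \<one>\<^bsub>Y\<^esub> y" by (rule M.le_r)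
  ultimately show ?thesis by (rule antisym)
qed

end
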